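(* Assume that the ALS parameter sequence $(\mathbf p_k)_{k\in\mathbb N}$ is bounded. If some accumulation point $\bar v$ of the sequence $(v_k)_{k\in\mathbb N}$ is isolated in the (nonempty) set of accumulation points of $(v_k)_{k\in\mathbb N}$, then $v_k\to\bar v$ as $k\to\infty$.
   Context: Let $d\ge 1$ and $m_1,\dots,m_d$ be positive integers, $N=\prod_{\nu=1}^d m_\nu$, and $\mathcal V=\bigotimes_{\nu=1}^d\mathbb R^{m_\nu}\cong\mathbb R^N$ with the Euclidean inner product. Let $A\in\mathbb R^{N\times N}$ be symmetric positive definite and $b\in\mathcal V\setminus\{0\}$; put $f(v)=\frac{1}{\|b\|^2}\big(\tfrac12\langle Av,v\rangle-\langle b,v\rangle\big)$. A tensor format representation consists of an integer $L\ge d$, finite-dimensional real inner product spaces $P_1,\dots,P_L$, the parameter space $P=P_1\times\dots\times P_L$ (with product norm), and a multilinear map $U:P\to\mathcal V$; put $F=f\circ U$. For $\mathbf p=(p_1,\dots,p_L)\in P$ and $\mu\in\{1,\dots,L\}$ let $W_{\mu,\mathbf p^{[\mu]}}:P_\mu\to\mathcal V$ be the linear map $q\mapsto U(p_1,\dots,p_{\mu-1},q,p_{\mu+1},\dots,p_L)$ (depending only on $\mathbf p^{[\mu]}=(p_1,\dots,p_{\mu-1},p_{\mu+1},\dots,p_L)$). Linear maps are identified with matrices w.r.t. orthonormal bases; $X^T$ is the transpose, $X^+$ the Moore–Penrose pseudoinverse. ALS: choose $\mathbf p_1=(p_1^1,\dots,p_L^1)\in P$. For $k=1,2,\dots$ and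 $\mu=1,\dots,L$ in this order let $W_{k,\mu}:=W_{\mu,(p_1^{k+1},\dots,p_{\mu-1}^{k+1},p_{\mu+1}^k,\dots,p_L^k)}$ and $p_\mu^{k+1}:=(W_{k,\mu}^TAW_{k,\mu})^+W_{k,\mu}^Tb$ (the minimum-norm minimiser of $q\mapsto F(p_1^{k+1},\dots,p_{\mu-1}^{k+1},q,p_{\mu+1}^k,\dots,p_L^k)$). Put $\mathbf p_k=(p_1^k,\dots,p_L^k)$ and $v_k=U(\mathbf p_k)$. *)

theory Defs
  imports Complex_Main "Jordan_Normal_Form.Matrix"
begin

text \<open>Vectors of R^k are represented as real vec of dimension k (Jordan_Normal_Form),
  matrices as real mat.  Linear maps are identified with matrices w.r.t. the standard
  (orthonormal) bases.\<close>

definition vnorm :: "real vec \<Rightarrow> real" where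
  "vnorm v = sqrt (v \<bullet> v)"

text \<open>Product norm on P = P_1 x ... x P_L (components indexed 0..L-1).\<close>
definition pnorm :: "nat \<Rightarrow> (nat \<Rightarrow> real vec) \<Rightarrow> real" where
  "pnorm L p = sqrt (\<Sum>\<mu><L. (vnorm (p \<mu>))\<^sup>2)"

definition pinv :: "real mat \<Rightarrow> real mat" where
  "pinv M = (THE X. X \<in> carrier_mat (dim_col M) (dim_row M) \<and>
                     M * X * M = M \<and> X * M * X = X \<and>
                     transpose_mat (M * X) = M * X \<and> transpose_mat (X * M) = X * M)"

text \<open>U : P_1 x ... x P_L -> R^N multilinear, P_mu = R^(n mu).
  Tuples are functions nat => real vec; only components mu < L matter.\<close>
definition multilinear_format ::
  "nat \<Rightarrow> (nat \<Rightarrow> nat) \<Rightarrow> nat \<Rightarrow> ((nat \<Rightarrow> real vec) \<Rightarrow> real vec) \<Rightarrow> bool" where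
  "multilinear_format L n N U \<longleftrightarrow>
     (\<forall>p. (\<forall>\<mu><L. p \<mu> \<in> carrier_vec (n \<mu>)) \<longrightarrow> U p \<in> carrier_vec N) \<and>
     (\<forall>p q. (\<forall>\<mu><L. p \<mu> = q \<mu>) \<longrightarrow> U p = U q) \<and>
     (\<forall>\<mu><L. \<forall>p. (\<forall>\<nu><L. p \<nu> \<in> carrier_vec (n \<nu>)) \<longrightarrow>
        (\<forall>x \<in> carrier_vec (n \<mu>). \<forall>y \<in> carrier_vec (n \<mu>). \<forall>a c :: real.
           U (p(\<mu> := a \<cdot>\<^sub>v x + c \<cdot>\<^sub>v y)) = a \<cdot>\<^sub>v U (p(\<mu> := x)) + c \<cdot>\<^sub>v U (p(\<mu> := y))))"

text \<open>Matrix (N x n mu) of the linear map W_{mu,p}: q \<mapsto> U(p_1,..,q,..,p_L).\<close>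
definition Wmat :: "nat \<Rightarrow> (nat \<Rightarrow> nat) \<Rightarrow> ((nat \<Rightarrow> real vec) \<Rightarrow> real vec)
                     \<Rightarrow> nat \<Rightarrow> (nat \<Rightarrow> real vec) \<Rightarrow> real mat" where
  "Wmat N n U \<mu> p = mat N (n \<mu>) (\<lambda>(j, i). U (p(\<mu> := unit_vec (n \<mu>) i)) $ j)"

definition vec_tendsto :: "(nat \<Rightarrow> real vec) \<Rightarrow> real vec \<Rightarrow> bool" where
  "vec_tendsto X l \<longleftrightarrow> (\<lambda>k. vnorm (X k - l)) \<longlonglongrightarrow> 0"

definition acc_points :: "nat \<Rightarrow> (nat \<Rightarrow> real vec) \<Rightarrow> real vec set" where
  "acc_points N X = {l \<in> carrier_vec N. \<exists>r. strict_mono r \<and> vec_tendsto (X \<circ> r) l}"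

end

theory Submission
  imports Defs "HOL-Analysis.L2_Norm" "Jordan_Normal_Form.Determinant" "HOL-Library.Infinite_Set"
begin


definition penrose :: "real mat \<Rightarrow> real mat \<Rightarrow> bool" where
  "penrose M X \<longleftrightarrow> X \<in> carrier_mat (dim_col M) (dim_row M) \<and>
                     M * X * M = M \<and> X * M * X = X \<and>
                     transpose_mat (M * X) = M * X \<and> transpose_mat (X * M) = X * M"

lemma penrose_unique:
  assumes M: "M \<in> carrier_mat n n" and PX: "penrose M X" and PY: "penrose M Y"
  shows "X = Y"
proof -
  have X: "X \<in> carrier_mat n n" and Y: "Y \<in> carrier_mat n n" using PX PY M unfolding penrose_def by auto
  have mc: "\<And>A B :: real mat. A \<in> carrier_mat n n \<Longrightarrow> B \<in> carrier_mat n n \<Longrightarrow> A * B \<in> carrier_mat n n" by auto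
  have tc: "\<And>A :: real mat. A \<in> carrier_mat n n \<Longrightarrow> transpose_mat A \<in> carrier_mat n n" by auto
  have as: "\<And>A B C :: real mat. A \<in> carrier_mat n n \<Longrightarrow> B \<in> carrier_mat n n \<Longrightarrow> C \<in> carrier_mat n n \<Longrightarrow> A * B * C = A * (B * C)"
    by auto
  have tm: "transpose_mat (A * B) = transpose_mat B * transpose_mat A"
    if "A \<in> carrier_mat n n" "B \<in> carrier_mat n n" for A B :: "real mat"
    using transpose_mult[OF that] .
  note ss = mc tc as tm M X Y
  have X1: "M * X * M = M" "X * M * X = X" "transpose_mat (M * X) = M * X" "transpose_mat (X * M) = X * M"
    using PX unfolding penrose_def by auto
  have Y1: "M * Y * M = M" "Y * M * Y = Y" "transpose_mat (M * Y) = M * Y" "transpose_mat (Y * M) = Y * M"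
    using PY unfolding penrose_def by auto
  have tM: "transpose_mat M = transpose_mat M * (transpose_mat Y * transpose_mat M)"
  proof -
    have "transpose_mat M = transpose_mat (M * Y * M)" using Y1 by simp
    also have "\<dots> = transpose_mat M * (transpose_mat Y * transpose_mat M)" by (simp add: ss del: transpose_carrier_mat)
    finally show ?thesis .
  qed
  have tM2: "transpose_mat M = transpose_mat M * (transpose_mat X * transpose_mat M)"
  proof -
    have "transpose_mat M = transpose_mat (M * X * M)" using X1 by simp
    also have "\<dots> = transpose_mat M * (transpose_mat X * transpose_mat M)" by (simp add: ss del: transpose_carrier_mat)
    finally show ?thesis .
  qed
  have "X = X * (M * X)" using X1 by (simp add: ss)
  also have "\<dots> = X * transpose_mat (M * X)" using X1 by simp
  also have "\<dots> = X * (transpose_mat X * transpose_mat M)" by (simp add: ss del: transpose_carrier_mat)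
  also have "\<dots> = X * (transpose_mat X * (transpose_mat M * (transpose_mat Y * transpose_mat M)))"
    using tM by simp
  also have "\<dots> = X * ((transpose_mat X * transpose_mat M) * (transpose_mat Y * transpose_mat M))"
    by (simp add: ss del: transpose_carrier_mat)
  also have "\<dots> = X * (transpose_mat (M * X) * transpose_mat (M * Y))"
    by (simp add: ss del: transpose_carrier_mat)
  also have "\<dots> = X * ((M * X) * (M * Y))" using X1 Y1 by simp
  also have "\<dots> = (X * M * X) * (M * Y)" by (simp add: ss)
  also have "\<dots> = X * (M * Y)" using X1 by simp
  finally have eX: "X = X * (M * Y)" .
  have "Y = (Y * M) * Y" using Y1 by (simp add: ss)
  also have "\<dots> = transpose_mat (Y * M) * Y" using Y1 by simp
  also have "\<dots> = (transpose_mat M * transpose_mat Y) * Y" by (simp add: ss del: transpose_carrier_mat)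
  also have "\<dots> = ((transpose_mat M * (transpose_mat X * transpose_mat M)) * transpose_mat Y) * Y"
    using tM2 by simp
  also have "\<dots> = ((transpose_mat M * transpose_mat X) * (transpose_mat M * transpose_mat Y)) * Y"
    by (simp add: ss del: transpose_carrier_mat)
  also have "\<dots> = (transpose_mat (X * M) * transpose_mat (Y * M)) * Y"
    by (simp add: ss del: transpose_carrier_mat)
  also have "\<dots> = ((X * M) * (Y * M)) * Y" using X1 Y1 by simp
  also have "\<dots> = X * M * (Y * M * Y)" by (simp add: ss)
  also have "\<dots> = X * (M * Y)" using Y1 by (simp add: ss)
  finally show ?thesis using eX by simp
qed



lemma wide_kernel:
  fixes C :: "real mat"
  assumes C: "C \<in> carrier_mat a b" and ab: "a < b"
  shows "\<exists>v \<in> carrier_vec b. v \<noteq> 0\<^sub>v b \<and> C *\<^sub>v v = 0\<^sub>v a"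
proof -
  define c where "c = (\<lambda>i. vec b (\<lambda>j. if i < a then C $$ (i,j) else 0) :: real vec)"
  define C' where "C' = mat\<^sub>r b b (\<lambda>i. if i = b - 1 then 0\<^sub>v b else c i)"
  have "det C' = 0" unfolding C'_def
    by (rule det_row_0, insert ab, auto simp: c_def)
  moreover have C'c: "C' \<in> carrier_mat b b" unfolding C'_def by auto
  ultimately obtain v where v: "v \<in> carrier_vec b" "v \<noteq> 0\<^sub>v b" "C' *\<^sub>v v = 0\<^sub>v b"
    using det_0_iff_vec_prod_zero_field[OF C'c] by auto
  have "C *\<^sub>v v = 0\<^sub>v a"
  proof (rule eq_vecI)
    fix i assume i: "i < dim_vec (0\<^sub>v a :: real vec)"
    hence ia: "i < a" by simp
    have "(C' *\<^sub>v v) $ i = 0" using v(3) ia ab by simp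
    moreover have "(C' *\<^sub>v v) $ i = (C *\<^sub>v v) $ i"
      using ia ab C v(1) unfolding C'_def c_def
      by (auto simp: mult_mat_vec_def scalar_prod_def)
    ultimately show "(C *\<^sub>v v) $ i = 0\<^sub>v a $ i" using ia by simp
  qed (use C in simp)
  thus ?thesis using v by blast
qed



lemma mat_eq_by_vec:
  fixes A B :: "real mat"
  assumes A: "A \<in> carrier_mat n m" and B: "B \<in> carrier_mat n m"
    and eq: "\<And>x. x \<in> carrier_vec m \<Longrightarrow> A *\<^sub>v x = B *\<^sub>v x"
  shows "A = B"
proof (rule eq_matI)
  fix i j assume i: "i < dim_row B" and j: "j < dim_col B"
  have "A *\<^sub>v unit_vec m j = B *\<^sub>v unit_vec m j" using eq by simp
  hence "(A *\<^sub>v unit_vec m j) $ i = (B *\<^sub>v unit_vec m j) $ i" by simp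
  thus "A $$ (i, j) = B $$ (i, j)" using A B i j by simp
qed (use A B in auto)

lemma vec_self_zero:
  fixes v :: "real vec"
  assumes v: "v \<in> carrier_vec n" and z: "v \<bullet> v = 0"
  shows "v = 0\<^sub>v n"
proof (rule eq_vecI)
  have "(\<Sum>i<n. v $ i * v $ i) = 0" using z v unfolding scalar_prod_def by (simp add: atLeast0LessThan)
  hence "\<forall>i\<in>{..<n}. v $ i * v $ i = 0" by (subst sum_nonneg_eq_0_iff[symmetric]) auto
  thus "\<And>i. i < dim_vec (0\<^sub>v n) \<Longrightarrow> v $ i = 0\<^sub>v n $ i" by simp
qed (use v in simp)

fun psum :: "real mat \<Rightarrow> nat \<Rightarrow> (nat \<Rightarrow> real) \<Rightarrow> nat \<Rightarrow> real mat" where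
  "psum M n c 0 = 0\<^sub>m n n"
| "psum M n c (Suc K) = psum M n c K + c K \<cdot>\<^sub>m (M ^\<^sub>m K)"

context
  fixes M :: "real mat" and n :: nat
  assumes M: "M \<in> carrier_mat n n"
begin

lemma psum_carrier: "psum M n c K \<in> carrier_mat n n"
  using M by (induct K) auto

lemma psum_entry: "a < n \<Longrightarrow> b < n \<Longrightarrow> psum M n c K $$ (a,b) = (\<Sum>i<K. c i * (M ^\<^sub>m i) $$ (a,b))"
proof (induct K)
  case (Suc K)
  have "psum M n c (Suc K) $$ (a,b) = psum M n c K $$ (a,b) + c K * (M ^\<^sub>m K) $$ (a,b)"
    using Suc.prems M psum_carrier[of c K] by simp
  thus ?case using Suc by simp
qed simp

lemma pow_comm: "M * M ^\<^sub>m k = M ^\<^sub>m k * M"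
proof (induct k)
  case 0 thus ?case using M by simp
next
  case (Suc k)
  have "M * M ^\<^sub>m Suc k = (M * M ^\<^sub>m k) * M" using assoc_mult_mat[OF M pow_carrier_mat[OF M, of k] M] by simp
  also have "\<dots> = M ^\<^sub>m Suc k * M" using Suc by simp
  finally show ?case .
qed

lemma pow_transpose: "transpose_mat M = M \<Longrightarrow> transpose_mat (M ^\<^sub>m k) = M ^\<^sub>m k"
proof (induct k)
  case 0 thus ?case using M by simp
next
  case (Suc k)
  have "transpose_mat (M ^\<^sub>m Suc k) = transpose_mat M * transpose_mat (M ^\<^sub>m k)"
    using M by (simp add: transpose_mult[of _ n n _ n])
  also have "\<dots> = M ^\<^sub>m Suc k" using Suc pow_comm by simp
  finally show ?case .
qed

lemma psum_comm: "M * psum M n c K = psum M n c K * M"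
proof (induct K)
  case 0 thus ?case using M by simp
next
  case (Suc K)
  have P: "psum M n c K \<in> carrier_mat n n" by (rule psum_carrier)
  have "M * psum M n c (Suc K) = M * psum M n c K + M * (c K \<cdot>\<^sub>m (M ^\<^sub>m K))"
    using M P by (simp add: mult_add_distrib_mat)
  also have "\<dots> = psum M n c K * M + (c K \<cdot>\<^sub>m (M ^\<^sub>m K)) * M"
    using M Suc pow_comm[of K] mult_smult_distrib[OF M pow_carrier_mat[OF M, of K]] mult_smult_assoc_mat[OF pow_carrier_mat[OF M, of K] M] by simp
  also have "\<dots> = psum M n c (Suc K) * M" using M P by (simp add: add_mult_distrib_mat)
  finally show ?case .
qed

lemma psum_transpose: "transpose_mat M = M \<Longrightarrow> transpose_mat (psum M n c K) = psum M n c K"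
proof (induct K)
  case 0 thus ?case by simp
next
  case (Suc K)
  have ts: "transpose_mat (c K \<cdot>\<^sub>m (M ^\<^sub>m K)) = c K \<cdot>\<^sub>m transpose_mat (M ^\<^sub>m K)"
    by (rule eq_matI) auto
  thus ?case using Suc psum_carrier[of c K] M pow_transpose
    by (simp add: transpose_add[of _ n n])
qed

lemma psum_shift: "psum M n c (Suc K) = c 0 \<cdot>\<^sub>m 1\<^sub>m n + M * psum M n (c \<circ> Suc) K"
proof (induct K)
  case 0 thus ?case using M by simp
next
  case (Suc K)
  have P: "psum M n (c \<circ> Suc) K \<in> carrier_mat n n" by (rule psum_carrier)
  have "psum M n c (Suc (Suc K)) = (c 0 \<cdot>\<^sub>m 1\<^sub>m n + M * psum M n (c \<circ> Suc) K) + c (Suc K) \<cdot>\<^sub>m (M ^\<^sub>m Suc K)"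
    by (subst psum.simps(2), subst Suc, rule refl)
  also have "M ^\<^sub>m Suc K = M * M ^\<^sub>m K" using pow_comm by simp
  also have "(c 0 \<cdot>\<^sub>m 1\<^sub>m n + M * psum M n (c \<circ> Suc) K) + c (Suc K) \<cdot>\<^sub>m (M * M ^\<^sub>m K)
      = c 0 \<cdot>\<^sub>m 1\<^sub>m n + M * (psum M n (c \<circ> Suc) K + c (Suc K) \<cdot>\<^sub>m (M ^\<^sub>m K))"
    using M P mult_smult_distrib[OF M pow_carrier_mat[OF M, of K]] by (simp add: mult_add_distrib_mat assoc_add_mat[of _ n n])
  also have "\<dots> = c 0 \<cdot>\<^sub>m 1\<^sub>m n + M * psum M n (c \<circ> Suc) (Suc K)" by simp
  finally show ?case .
qed

lemma psum_low_zero: "(\<forall>i<j. c i = 0) \<Longrightarrow> psum M n c (j + K) = M ^\<^sub>m j * psum M n (\<lambda>i. c (i + j)) K"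
proof (induct j arbitrary: c)
  case 0 thus ?case using M left_mult_one_mat[OF psum_carrier] by simp
next
  case (Suc j)
  have IH: "psum M n (c \<circ> Suc) (j + K) = M ^\<^sub>m j * psum M n (\<lambda>i. (c \<circ> Suc) (i + j)) K"
    using Suc by auto
  have "psum M n c (Suc j + K) = c 0 \<cdot>\<^sub>m 1\<^sub>m n + M * psum M n (c \<circ> Suc) (j + K)"
    using psum_shift by simp
  also have "\<dots> = M * (M ^\<^sub>m j * psum M n (\<lambda>i. c (i + Suc j)) K)"
  proof -
    have z: "(0::real) \<cdot>\<^sub>m 1\<^sub>m n = 0\<^sub>m n n" by (rule eq_matI) auto
    have "M * (M ^\<^sub>m j * psum M n (\<lambda>i. c (i + Suc j)) K) \<in> carrier_mat n n"
      using mult_carrier_mat[OF M mult_carrier_mat[OF pow_carrier_mat[OF M] psum_carrier]] .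
    thus ?thesis using Suc.prems IH z by simp
  qed
  also have "\<dots> = (M * M ^\<^sub>m j) * psum M n (\<lambda>i. c (i + Suc j)) K"
    by (rule assoc_mult_mat[symmetric]) (use M psum_carrier in auto)
  also have "\<dots> = M ^\<^sub>m Suc j * psum M n (\<lambda>i. c (i + Suc j)) K"
    using pow_comm[of j] by simp
  finally show ?case .
qed

lemma pow_kernel:
  assumes sym: "transpose_mat M = M" and x: "x \<in> carrier_vec n"
  shows "M ^\<^sub>m (Suc s) *\<^sub>v x = 0\<^sub>v n \<Longrightarrow> M *\<^sub>v x = 0\<^sub>v n"
  using x
proof (induct s arbitrary: x)
  case 0 thus ?case using M by simp
next
  case (Suc s)
  have "M ^\<^sub>m Suc s *\<^sub>v (M *\<^sub>v x) = 0\<^sub>v n"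
    using Suc.prems M pow_comm[of "Suc s"] by (metis assoc_mult_mat_vec pow_carrier_mat pow_mat.simps(2))
  hence mmx: "M *\<^sub>v (M *\<^sub>v x) = 0\<^sub>v n" using Suc.hyps M Suc.prems by simp
  have "(M *\<^sub>v x) \<bullet> (M *\<^sub>v x) = (transpose_mat M *\<^sub>v (M *\<^sub>v x)) \<bullet> x"
    using transpose_vec_mult_scalar[of M n n x "M *\<^sub>v x"] M Suc.prems by simp
  also have "\<dots> = 0" using sym mmx Suc.prems by simp
  finally show ?case using vec_self_zero M Suc.prems by auto
qed

end



lemma penrose_from_T:
  fixes M T :: "real mat"
  assumes M: "M \<in> carrier_mat n n" and T: "T \<in> carrier_mat n n"
    and sM: "transpose_mat M = M" and sT: "transpose_mat T = T"
    and cm: "M * T = T * M" and MMT: "M * (M * T) = M"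
  shows "penrose M (T * (M * T))"
proof -
  have mc: "\<And>A B :: real mat. A \<in> carrier_mat n n \<Longrightarrow> B \<in> carrier_mat n n \<Longrightarrow> A * B \<in> carrier_mat n n" by auto
  have as: "\<And>A B C :: real mat. A \<in> carrier_mat n n \<Longrightarrow> B \<in> carrier_mat n n \<Longrightarrow> C \<in> carrier_mat n n \<Longrightarrow> A * B * C = A * (B * C)"
    by auto
  note ss = mc as M T
  define E where "E = M * T"
  have Ec: "E \<in> carrier_mat n n" unfolding E_def using M T by auto
  note ss = ss Ec
  have ME: "M * E = M" using MMT unfolding E_def .
  have EM: "E * M = M"
  proof -
    have "E * M = M * (T * M)" unfolding E_def by (simp add: ss)
    also have "\<dots> = M" using cm MMT by simp
    finally show ?thesis .
  qed
  have ET: "E * T = T * E"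
  proof -
    have "E * T = (T * M) * T" unfolding E_def by (simp only: cm)
    also have "\<dots> = T * E" unfolding E_def by (simp add: ss)
    finally show ?thesis .
  qed
  have EE: "E * E = E"
  proof -
    have "E * E = (M * T) * (M * T)" unfolding E_def ..
    also have "\<dots> = M * ((T * M) * T)" by (simp add: ss)
    also have "\<dots> = M * ((M * T) * T)" by (simp only: cm)
    also have "\<dots> = (M * (M * T)) * T" by (simp add: ss)
    also have "\<dots> = E" using MMT unfolding E_def by simp
    finally show ?thesis .
  qed
  have sE: "transpose_mat E = E"
    unfolding E_def using transpose_mult[OF M T] sM sT cm by simp
  have MX: "M * (T * E) = E"
  proof -
    have "M * (T * E) = (M * T) * E" by (simp add: ss)
    thus ?thesis using EE unfolding E_def by simp
  qed
  have XM: "T * E * M = E"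
  proof -
    have "T * E * M = T * (E * M)" by (simp add: ss)
    thus ?thesis using EM unfolding E_def using cm by simp
  qed
  have "T * (M * T) = T * E" unfolding E_def ..
  moreover have "M * (T * E) * M = M" using MX EM by simp
  moreover have "T * E * M * (T * E) = T * E"
  proof -
    have "T * E * M * (T * E) = E * (T * E)" using XM by simp
    also have "\<dots> = (E * T) * E" by (simp add: ss)
    also have "\<dots> = T * (E * E)" using ET by (simp add: ss)
    finally show ?thesis using EE by simp
  qed
  moreover have "T * E \<in> carrier_mat n n" by (simp add: ss)
  ultimately show ?thesis unfolding penrose_def using MX XM sE M by simp
qed



lemma zero_mat_mult_vec: "x \<in> carrier_vec m \<Longrightarrow> (0\<^sub>m n m :: real mat) *\<^sub>v x = 0\<^sub>v n"
  by (intro eq_vecI) (auto simp: scalar_prod_def)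

lemma smult_mat_mult_vec: "A \<in> carrier_mat n m \<Longrightarrow> x \<in> carrier_vec m \<Longrightarrow> ((a::real) \<cdot>\<^sub>m A) *\<^sub>v x = a \<cdot>\<^sub>v (A *\<^sub>v x)"
  by (intro eq_vecI) (auto simp: scalar_prod_def sum_distrib_left ac_simps)

lemma penrose_exists:
  fixes M :: "real mat"
  assumes M: "M \<in> carrier_mat n n" and sym: "transpose_mat M = M"
  shows "\<exists>X. penrose M X"
proof -
  define K where "K = n * n"
  define C where "C = mat K (Suc K) (\<lambda>(r,i). (M ^\<^sub>m i) $$ (r div n, r mod n))"
  obtain v where v: "v \<in> carrier_vec (Suc K)" "v \<noteq> 0\<^sub>v (Suc K)" "C *\<^sub>v v = 0\<^sub>v K"
    using wide_kernel[of C K "Suc K"] by (auto simp: C_def)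
  define c where "c = (\<lambda>i. v $ i)"
  have P0: "psum M n c (Suc K) = 0\<^sub>m n n"
  proof (rule eq_matI)
    fix a b assume a: "a < dim_row (0\<^sub>m n n :: real mat)" and b: "b < dim_col (0\<^sub>m n n :: real mat)"
    hence a: "a < n" and b: "b < n" by auto
    have "Suc a * n \<le> n * n" using a by (intro mult_le_mono1) simp
    hence r: "a * n + b < K" unfolding K_def using b by simp
    have dv: "(a * n + b) div n = a" and md: "(a * n + b) mod n = b" using b by auto
    have "(C *\<^sub>v v) $ (a * n + b) = 0" using v(3) r by simp
    moreover have "(C *\<^sub>v v) $ (a * n + b) = (\<Sum>i<Suc K. (M ^\<^sub>m i) $$ (a, b) * v $ i)"
      using r v(1) dv md unfolding C_def by (simp add: scalar_prod_def atLeast0LessThan)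
    ultimately have "(\<Sum>i<Suc K. c i * (M ^\<^sub>m i) $$ (a, b)) = 0"
      unfolding c_def by (simp add: mult.commute)
    thus "psum M n c (Suc K) $$ (a, b) = 0\<^sub>m n n $$ (a, b)"
      using psum_entry[OF M a b, of c "Suc K"] a b by (simp del: psum.simps)
  qed (use psum_carrier[OF M] M in auto)
  obtain i0 where i0: "i0 < Suc K" "c i0 \<noteq> 0"
    using v(1,2) unfolding c_def by (metis carrier_vecD eq_vecI index_zero_vec(1,2))
  define j where "j = (LEAST i. c i \<noteq> 0)"
  have cj: "c j \<noteq> 0" unfolding j_def by (rule LeastI[of _ i0], rule i0(2))
  have ji: "j \<le> i0" unfolding j_def by (rule Least_le, rule i0(2))
  have low: "\<forall>i<j. c i = 0" unfolding j_def using not_less_Least by blast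
  define K' where "K' = K - j"
  have SK: "Suc K = j + Suc K'" unfolding K'_def using ji i0 by simp
  define R where "R = psum M n (\<lambda>i. c (Suc i + j)) K'"
  define Q where "Q = c j \<cdot>\<^sub>m 1\<^sub>m n + M * R"
  have Rc: "R \<in> carrier_mat n n" unfolding R_def by (rule psum_carrier[OF M])
  have Qc: "Q \<in> carrier_mat n n" unfolding Q_def using Rc M by auto
  have "psum M n (\<lambda>i. c (i + j)) (Suc K') = Q"
    unfolding Q_def R_def using psum_shift[OF M, of "\<lambda>i. c (i + j)" K'] by (simp add: o_def)
  hence MjQ: "M ^\<^sub>m j * Q = 0\<^sub>m n n" using psum_low_zero[OF M low, of "Suc K'"] P0 SK by simp
  have MQ: "M *\<^sub>v (Q *\<^sub>v x) = 0\<^sub>v n" if x: "x \<in> carrier_vec n" for x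
  proof (cases j)
    case 0
    hence "Q = 0\<^sub>m n n" using MjQ M Qc by simp
    thus ?thesis using M x by (intro eq_vecI) (auto simp: scalar_prod_def)
  next
    case (Suc s)
    have "M ^\<^sub>m j *\<^sub>v (Q *\<^sub>v x) = 0\<^sub>v n"
      using MjQ assoc_mult_mat_vec[OF pow_carrier_mat[OF M] Qc x, of j, symmetric] x by (simp add: zero_mat_mult_vec)
    thus ?thesis using pow_kernel[OF M sym, of "Q *\<^sub>v x" s] Suc Qc x by simp
  qed
  define T where "T = (- 1 / c j) \<cdot>\<^sub>m R"
  have Tc: "T \<in> carrier_mat n n" unfolding T_def using Rc by simp
  have MMT: "M * (M * T) = M"
  proof (rule mat_eq_by_vec[OF _ M])
    show "M * (M * T) \<in> carrier_mat n n" using M Tc by simp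
    fix x :: "real vec" assume x: "x \<in> carrier_vec n"
    have Qx: "Q *\<^sub>v x = c j \<cdot>\<^sub>v x + M *\<^sub>v (R *\<^sub>v x)"
      unfolding Q_def using M Rc x by (simp add: add_mult_distrib_mat_vec[of _ n n] smult_mat_mult_vec[of _ n n])
    have "M *\<^sub>v (Q *\<^sub>v x) = c j \<cdot>\<^sub>v (M *\<^sub>v x) + M *\<^sub>v (M *\<^sub>v (R *\<^sub>v x))"
      unfolding Qx using M Rc x by (simp add: mult_add_distrib_mat_vec[of _ n n] mult_mat_vec[of _ n n])
    hence e: "c j \<cdot>\<^sub>v (M *\<^sub>v x) + M *\<^sub>v (M *\<^sub>v (R *\<^sub>v x)) = 0\<^sub>v n" using MQ[OF x] by simp
    have "(M * (M * T)) *\<^sub>v x = M *\<^sub>v (M *\<^sub>v (T *\<^sub>v x))"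
      using assoc_mult_mat_vec[OF M mult_carrier_mat[OF M Tc] x] assoc_mult_mat_vec[OF M Tc x] by simp
    also have "T *\<^sub>v x = (- 1 / c j) \<cdot>\<^sub>v (R *\<^sub>v x)" unfolding T_def using Rc x
      by (rule smult_mat_mult_vec)
    also have "M *\<^sub>v (M *\<^sub>v ((- 1 / c j) \<cdot>\<^sub>v (R *\<^sub>v x))) = (- 1 / c j) \<cdot>\<^sub>v (M *\<^sub>v (M *\<^sub>v (R *\<^sub>v x)))"
      using M Rc x by (simp add: mult_mat_vec[of _ n n])
    also have "\<dots> = M *\<^sub>v x"
    proof (rule eq_vecI)
      fix i assume "i < dim_vec (M *\<^sub>v x)"
      hence i: "i < n" using M by simp
      have "c j * (M *\<^sub>v x) $ i + (M *\<^sub>v (M *\<^sub>v (R *\<^sub>v x))) $ i = 0"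
        using arg_cong[OF e, of "\<lambda>w. w $ i"] i M by simp
      thus "((- 1 / c j) \<cdot>\<^sub>v (M *\<^sub>v (M *\<^sub>v (R *\<^sub>v x)))) $ i = (M *\<^sub>v x) $ i"
        using i M cj by (simp add: field_simps)
    qed (use M in simp)
    finally show "(M * (M * T)) *\<^sub>v x = M *\<^sub>v x" .
  qed
  have cm: "M * T = T * M"
    unfolding T_def using psum_comm[OF M] Rc M unfolding R_def
    by (simp add: mult_smult_distrib[OF M psum_carrier[OF M]] mult_smult_assoc_mat[OF psum_carrier[OF M] M])
  have sT: "transpose_mat T = T"
  proof -
    have "transpose_mat T = (- 1 / c j) \<cdot>\<^sub>m transpose_mat R" unfolding T_def by (rule eq_matI) auto
    thus ?thesis using psum_transpose[OF M sym] unfolding T_def R_def by simp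
  qed
  show ?thesis using penrose_from_T[OF M Tc sym sT cm MMT] by blast
qed

lemma pinv_props:
  fixes M :: "real mat"
  assumes M: "M \<in> carrier_mat n n" and sym: "transpose_mat M = M"
  shows "penrose M (pinv M)"
proof -
  obtain X where X: "penrose M X" using penrose_exists[OF M sym] by blast
  have "pinv M = X" unfolding pinv_def
    by (rule the_equality, use X in \<open>simp add: penrose_def\<close>,
        use penrose_unique[OF M _ X] in \<open>simp add: penrose_def\<close>)
  thus ?thesis using X by simp
qed



lemma squeeze0:
  fixes f g :: "nat \<Rightarrow> real"
  assumes "\<And>k. \<bar>f k\<bar> \<le> g k" and "g \<longlonglongrightarrow> 0"
  shows "f \<longlonglongrightarrow> 0"
proof -
  have "(\<lambda>k. \<bar>f k\<bar>) \<longlonglongrightarrow> 0"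
    by (rule tendsto_sandwich[of "\<lambda>_. 0" _ _ g]) (use assms in auto)
  thus ?thesis by (simp add: tendsto_rabs_zero_iff)
qed

lemma vnorm_L2: "v \<in> carrier_vec N \<Longrightarrow> vnorm v = L2_set (\<lambda>i. v $ i) {..<N}"
  unfolding vnorm_def L2_set_def scalar_prod_def by (simp add: atLeast0LessThan power2_eq_square)

lemma vnorm_nonneg: "vnorm v \<ge> 0"
  unfolding vnorm_def scalar_prod_def by (auto intro!: sum_nonneg)

lemma vnorm_triangle:
  assumes "x \<in> carrier_vec N" "y \<in> carrier_vec N"
  shows "vnorm (x + y) \<le> vnorm x + vnorm y"
proof -
  have "L2_set (\<lambda>i. (x + y) $ i) {..<N} = L2_set (\<lambda>i. x $ i + y $ i) {..<N}"
    by (rule L2_set_cong) (use assms in auto)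
  thus ?thesis using assms L2_set_triangle_ineq[of "\<lambda>i. x $ i" "\<lambda>i. y $ i" "{..<N}"]
    by (simp add: vnorm_L2[of _ N])
qed

lemma vnorm_diff_triangle:
  assumes x: "x \<in> carrier_vec N" and y: "y \<in> carrier_vec N" and z: "z \<in> carrier_vec N"
  shows "vnorm (x - z) \<le> vnorm (x - y) + vnorm (y - z)"
proof -
  have "x - z = (x - y) + (y - z)" using x y z by (intro eq_vecI) auto
  thus ?thesis using vnorm_triangle[of "x - y" N "y - z"] x y z by simp
qed

lemma vnorm_minus_comm:
  assumes "x \<in> carrier_vec N" "y \<in> carrier_vec N"
  shows "vnorm (x - y) = vnorm (y - x)"
  using assms by (simp add: vnorm_L2[of _ N] L2_set_def power2_commute)

lemma vnorm_coord:
  assumes "v \<in> carrier_vec N" "i < N"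
  shows "\<bar>v $ i\<bar> \<le> vnorm v"
proof -
  have "\<bar>v $ i\<bar> = sqrt ((v $ i)\<^sup>2)" by simp
  also have "\<dots> \<le> sqrt (\<Sum>j<N. (v $ j)\<^sup>2)" using assms
    by (intro real_sqrt_le_mono member_le_sum) auto
  finally show ?thesis using assms vnorm_L2 by (simp add: L2_set_def)
qed

lemma vnorm_zero:
  assumes v: "v \<in> carrier_vec N" and z: "vnorm v = 0"
  shows "v = 0\<^sub>v N"
proof (rule eq_vecI)
  fix i assume "i < dim_vec (0\<^sub>v N)"
  hence "i < N" by simp
  thus "v $ i = 0\<^sub>v N $ i" using vnorm_coord[OF v, of i] z by simp
qed (use v in simp)

lemma vec_tendsto_coord:
  fixes X :: "nat \<Rightarrow> real vec"
  assumes X: "\<And>k. X k \<in> carrier_vec N" and l: "l \<in> carrier_vec N"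
  shows "vec_tendsto X l \<longleftrightarrow> (\<forall>i<N. (\<lambda>k. X k $ i) \<longlonglongrightarrow> l $ i)"
proof
  assume t: "vec_tendsto X l"
  show "\<forall>i<N. (\<lambda>k. X k $ i) \<longlonglongrightarrow> l $ i"
  proof (intro allI impI)
    fix i assume i: "i < N"
    have "(\<lambda>k. X k $ i - l $ i) \<longlonglongrightarrow> 0"
    proof (rule squeeze0[of _ "\<lambda>k. vnorm (X k - l)"])
      fix k show "\<bar>X k $ i - l $ i\<bar> \<le> vnorm (X k - l)"
        using vnorm_coord[of "X k - l" N i] X[of k] l i by simp
    qed (use t in \<open>simp add: vec_tendsto_def\<close>)
    thus "(\<lambda>k. X k $ i) \<longlonglongrightarrow> l $ i" by (rule LIM_zero_cancel)
  qed
next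
  assume c: "\<forall>i<N. (\<lambda>k. X k $ i) \<longlonglongrightarrow> l $ i"
  have "(\<lambda>k. sqrt (\<Sum>i<N. (X k $ i - l $ i)\<^sup>2)) \<longlonglongrightarrow> sqrt (\<Sum>i<N. (l $ i - l $ i)\<^sup>2)"
    by (intro tendsto_intros) (use c in auto)
  moreover have "\<And>k. vnorm (X k - l) = sqrt (\<Sum>i<N. (X k $ i - l $ i)\<^sup>2)"
    using X l by (simp add: vnorm_L2[of _ N] L2_set_def)
  ultimately show "vec_tendsto X l" unfolding vec_tendsto_def by simp
qed

lemma bw_coords:
  fixes X :: "nat \<Rightarrow> real vec"
  assumes X: "\<And>k. X k \<in> carrier_vec N" and B: "\<And>k. vnorm (X k) \<le> B"
  shows "m \<le> N \<Longrightarrow> \<exists>r. strict_mono r \<and> (\<forall>i<m. convergent (\<lambda>k. X (r k) $ i))"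
proof (induct m)
  case 0 have "strict_mono (id :: nat \<Rightarrow> nat)" by (simp add: strict_mono_def)
  thus ?case by blast
next
  case (Suc m)
  then obtain r where r: "strict_mono r" "\<forall>i<m. convergent (\<lambda>k. X (r k) $ i)" by auto
  define s where "s = (\<lambda>k. X (r k) $ m)"
  obtain r' where r': "strict_mono r'" "monoseq (\<lambda>k. s (r' k))" using seq_monosub by blast
  have "Bseq (\<lambda>k. s (r' k))"
    by (rule BseqI'[of _ B], unfold s_def real_norm_def, rule order_trans[OF vnorm_coord B])
       (use X Suc.prems in auto)
  hence cm: "convergent (\<lambda>k. s (r' k))" using r'(2) Bseq_monoseq_convergent by blast
  show ?case
  proof (intro exI[of _ "r \<circ> r'"] conjI allI impI)
    show "strict_mono (r \<circ> r')" using r r' strict_mono_o by blast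
    fix i assume "i < Suc m"
    show "convergent (\<lambda>k. X ((r \<circ> r') k) $ i)"
    proof (cases "i = m")
      case True thus ?thesis using cm unfolding s_def by simp
    next
      case False
      hence "convergent ((\<lambda>k. X (r k) $ i) \<circ> r')" using r(2) \<open>i < Suc m\<close> r'(1)
        by (intro convergent_subseq_convergent) auto
      thus ?thesis by (simp add: o_def)
    qed
  qed
qed

lemma bw:
  fixes X :: "nat \<Rightarrow> real vec"
  assumes X: "\<And>k. X k \<in> carrier_vec N" and B: "\<And>k. vnorm (X k) \<le> B"
  shows "\<exists>r l. strict_mono r \<and> l \<in> carrier_vec N \<and> vec_tendsto (X \<circ> r) l"
proof -
  obtain r where r: "strict_mono r" "\<forall>i<N. convergent (\<lambda>k. X (r k) $ i)"
    using bw_coords[where X=X and N=N and B=B and m=N, OF X B] by auto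
  define l where "l = vec N (\<lambda>i. lim (\<lambda>k. X (r k) $ i))"
  have "vec_tendsto (X \<circ> r) l"
    by (subst vec_tendsto_coord[of _ N]) (use X r(2) in \<open>auto simp: l_def convergent_LIMSEQ_iff\<close>)
  thus ?thesis using r(1) by (intro exI[of _ r] exI[of _ l]) (auto simp: l_def)
qed



lemma quad_expand:
  fixes A :: "real mat"
  assumes A: "A \<in> carrier_mat N N" and x: "x \<in> carrier_vec N"
  shows "x \<bullet> (A *\<^sub>v x) = (\<Sum>i<N. x $ i * (\<Sum>j<N. A $$ (i,j) * x $ j))"
  using A x by (simp add: scalar_prod_def atLeast0LessThan)

lemma quad_tendsto:
  fixes A :: "real mat" and X :: "nat \<Rightarrow> real vec"
  assumes A: "A \<in> carrier_mat N N" and X: "\<And>k. X k \<in> carrier_vec N" and l: "l \<in> carrier_vec N"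
    and t: "vec_tendsto X l"
  shows "(\<lambda>k. X k \<bullet> (A *\<^sub>v X k)) \<longlonglongrightarrow> l \<bullet> (A *\<^sub>v l)"
proof -
  have c: "\<forall>i<N. (\<lambda>k. X k $ i) \<longlonglongrightarrow> l $ i" using t vec_tendsto_coord[OF X l] by simp
  have "(\<lambda>k. (\<Sum>i<N. X k $ i * (\<Sum>j<N. A $$ (i,j) * X k $ j))) \<longlonglongrightarrow> (\<Sum>i<N. l $ i * (\<Sum>j<N. A $$ (i,j) * l $ j))"
    by (intro tendsto_intros) (use c in auto)
  thus ?thesis using quad_expand[OF A X] quad_expand[OF A l] by simp
qed

lemma self_dot_nonneg: "(x :: real vec) \<bullet> x \<ge> 0"
  unfolding scalar_prod_def by (auto intro!: sum_nonneg)

lemma self_dot_zero: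
  fixes x :: "real vec"
  assumes x: "x \<in> carrier_vec N" and z: "x \<bullet> x = 0"
  shows "x = 0\<^sub>v N"
  using vnorm_zero[OF x] z unfolding vnorm_def by simp

lemma coercive:
  fixes A :: "real mat"
  assumes A: "A \<in> carrier_mat N N"
    and pd: "\<forall>x \<in> carrier_vec N. x \<noteq> 0\<^sub>v N \<longrightarrow> x \<bullet> (A *\<^sub>v x) > 0"
  shows "\<exists>c>0. \<forall>x \<in> carrier_vec N. c * (x \<bullet> x) \<le> x \<bullet> (A *\<^sub>v x)"
proof (rule ccontr)
  assume "\<not> ?thesis"
  hence H: "\<forall>c>0. \<exists>x \<in> carrier_vec N. x \<bullet> (A *\<^sub>v x) < c * (x \<bullet> x)" by (auto simp: not_le)
  have "\<forall>k. \<exists>x. x \<in> carrier_vec N \<and> x \<bullet> (A *\<^sub>v x) < inverse (real (Suc k)) * (x \<bullet> x)"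
  proof
    fix k
    have "inverse (real (Suc k)) > 0" by simp
    thus "\<exists>x. x \<in> carrier_vec N \<and> x \<bullet> (A *\<^sub>v x) < inverse (real (Suc k)) * (x \<bullet> x)"
      using H by blast
  qed
  then obtain xs where xs: "\<And>k. xs k \<in> carrier_vec N" "\<And>k. xs k \<bullet> (A *\<^sub>v xs k) < inverse (real (Suc k)) * (xs k \<bullet> xs k)"
    by metis
  have pos: "xs k \<bullet> xs k > 0" for k
  proof -
    have "xs k \<noteq> 0\<^sub>v N"
    proof
      assume "xs k = 0\<^sub>v N"
      thus False using xs(2)[of k] A by simp
    qed
    thus ?thesis using self_dot_zero[OF xs(1)] self_dot_nonneg[of "xs k"] by force
  qed
  define u where "u k = (1 / sqrt (xs k \<bullet> xs k)) \<cdot>\<^sub>v xs k" for k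
  have uc: "u k \<in> carrier_vec N" for k unfolding u_def using xs(1) by simp
  have uu: "u k \<bullet> u k = 1" for k
    unfolding u_def using xs(1)[of k] pos[of k] by (simp add: power2_eq_square[symmetric])
  have uAu: "u k \<bullet> (A *\<^sub>v u k) < inverse (real (Suc k))" for k
  proof -
    have "u k \<bullet> (A *\<^sub>v u k) = (xs k \<bullet> (A *\<^sub>v xs k)) / (xs k \<bullet> xs k)"
      unfolding u_def using xs(1)[of k] pos[of k] A
      by (simp add: mult_mat_vec[of _ N N] power2_eq_square[symmetric])
    also have "\<dots> < inverse (real (Suc k))" using xs(2)[of k] pos[of k] by (simp add: divide_less_eq)
    finally show ?thesis .
  qed
  have un: "vnorm (u k) \<le> 1" for k using uu unfolding vnorm_def by simp
  obtain r l where r: "strict_mono r" and l: "l \<in> carrier_vec N" and t: "vec_tendsto (u \<circ> r) l"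
    using bw[where X=u and N=N and B=1, OF uc un] by auto
  have ucr: "\<And>k. (u \<circ> r) k \<in> carrier_vec N" using uc by simp
  have "(\<lambda>k. (u \<circ> r) k \<bullet> (1\<^sub>m N *\<^sub>v (u \<circ> r) k)) \<longlonglongrightarrow> l \<bullet> (1\<^sub>m N *\<^sub>v l)"
    by (rule quad_tendsto[OF _ ucr l t]) simp
  hence "(\<lambda>k. 1::real) \<longlonglongrightarrow> l \<bullet> l" using uu uc l by simp
  hence ll: "l \<bullet> l = 1" using LIMSEQ_const_iff by metis
  have "(\<lambda>k. (u \<circ> r) k \<bullet> (A *\<^sub>v (u \<circ> r) k)) \<longlonglongrightarrow> l \<bullet> (A *\<^sub>v l)"
    by (rule quad_tendsto[OF A ucr l t])
  moreover have "(\<lambda>k. inverse (real (Suc k))) \<longlonglongrightarrow> 0" by (rule LIMSEQ_inverse_real_of_nat)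
  moreover have "\<forall>k\<ge>0. (u \<circ> r) k \<bullet> (A *\<^sub>v (u \<circ> r) k) \<le> inverse (real (Suc k))"
  proof (intro allI impI)
    fix k :: nat
    have "k \<le> r k" using seq_suble[OF r] .
    hence a: "inverse (real (Suc (r k))) \<le> inverse (real (Suc k))" by (intro le_imp_inverse_le) auto
    have "u (r k) \<bullet> (A *\<^sub>v u (r k)) < inverse (real (Suc (r k)))" by (rule uAu)
    hence "u (r k) \<bullet> (A *\<^sub>v u (r k)) < inverse (real (Suc k))" using a by (rule order.strict_trans2)
    thus "(u \<circ> r) k \<bullet> (A *\<^sub>v (u \<circ> r) k) \<le> inverse (real (Suc k))" by simp
  qed
  ultimately have "l \<bullet> (A *\<^sub>v l) \<le> 0" by (intro LIMSEQ_le) auto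
  moreover have "l \<noteq> 0\<^sub>v N" using ll by auto
  ultimately show False using pd l by force
qed



lemma pinv_sym:
  fixes M :: "real mat"
  assumes M: "M \<in> carrier_mat n n" and sym: "transpose_mat M = M"
  shows "transpose_mat (pinv M) = pinv M"
proof -
  define X where "X = pinv M"
  have P: "penrose M X" unfolding X_def by (rule pinv_props[OF M sym])
  have X: "X \<in> carrier_mat n n" using P M unfolding penrose_def by auto
  have tX: "transpose_mat X \<in> carrier_mat n n" using X by simp
  have e: "M * X * M = M" "X * M * X = X" "transpose_mat (M * X) = M * X" "transpose_mat (X * M) = X * M"
    using P unfolding penrose_def by auto
  have a1: "M * transpose_mat X = X * M"
    using e(4) transpose_mult[OF X M] sym by simp
  have a2: "transpose_mat X * M = M * X"
    using e(3) transpose_mult[OF M X] sym by simp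
  have "penrose M (transpose_mat X)"
    unfolding penrose_def
  proof (intro conjI)
    show "transpose_mat X \<in> carrier_mat (dim_col M) (dim_row M)" using X M by simp
    have "transpose_mat (M * X * M) = M * transpose_mat X * M"
      using transpose_mult[OF mult_carrier_mat[OF M X] M] transpose_mult[OF M X] sym assoc_mult_mat[OF M tX M] by simp
    thus "M * transpose_mat X * M = M" using e(1) sym assoc_mult_mat[OF M tX M] by simp
    have "transpose_mat (X * M * X) = transpose_mat X * M * transpose_mat X"
      using transpose_mult[OF mult_carrier_mat[OF X M] X] transpose_mult[OF X M] sym tX M
      by (simp add: assoc_mult_mat[OF tX M tX])
    thus "transpose_mat X * M * transpose_mat X = transpose_mat X" using e(2) by simp
    show "transpose_mat (M * transpose_mat X) = M * transpose_mat X" using a1 e(4) by simp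
    show "transpose_mat (transpose_mat X * M) = transpose_mat X * M" using a2 e(3) by simp
  qed
  hence "transpose_mat X = X" using penrose_unique[OF M _ P] by blast
  thus ?thesis unfolding X_def .
qed

lemma sym_form:
  fixes A :: "real mat"
  assumes A: "A \<in> carrier_mat N N" and sym: "transpose_mat A = A"
    and x: "x \<in> carrier_vec N" and y: "y \<in> carrier_vec N"
  shows "x \<bullet> (A *\<^sub>v y) = y \<bullet> (A *\<^sub>v x)"
proof -
  have "(transpose_mat A *\<^sub>v x) \<bullet> y = x \<bullet> (A *\<^sub>v y)" by (rule transpose_vec_mult_scalar[OF A y x])
  thus ?thesis using sym comm_scalar_prod[of "A *\<^sub>v x" N y] A x y by simp
qed

definition gq :: "real mat \<Rightarrow> real vec \<Rightarrow> real vec \<Rightarrow> real" where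
  "gq A b v = (v \<bullet> (A *\<^sub>v v)) / 2 - b \<bullet> v"

lemma als_step:
  fixes W A :: "real mat" and b q :: "real vec"
  assumes W: "W \<in> carrier_mat N m" and A: "A \<in> carrier_mat N N" and sym: "transpose_mat A = A"
    and pd: "\<forall>x \<in> carrier_vec N. x \<noteq> 0\<^sub>v N \<longrightarrow> x \<bullet> (A *\<^sub>v x) > 0"
    and b: "b \<in> carrier_vec N" and q: "q \<in> carrier_vec m"
    and qs: "qs = pinv (transpose_mat W * A * W) *\<^sub>v (transpose_mat W *\<^sub>v b)"
  shows "qs \<in> carrier_vec m"
    and "gq A b (W *\<^sub>v q) = gq A b (W *\<^sub>v qs) + ((W *\<^sub>v (q - qs)) \<bullet> (A *\<^sub>v (W *\<^sub>v (q - qs)))) / 2"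
proof -
  define M where "M = transpose_mat W * A * W"
  have tW: "transpose_mat W \<in> carrier_mat m N" using W by simp
  have Mc: "M \<in> carrier_mat m m" unfolding M_def using W A by simp
  have Msym: "transpose_mat M = M"
    unfolding M_def using transpose_mult[OF mult_carrier_mat[OF tW A] W] transpose_mult[OF tW A] sym W A
    by (simp add: assoc_mult_mat[OF tW A W])
  have Mv: "M *\<^sub>v v = transpose_mat W *\<^sub>v (A *\<^sub>v (W *\<^sub>v v))" if "v \<in> carrier_vec m" for v
    unfolding M_def using that W A tW assoc_mult_mat[OF tW A W]
      assoc_mult_mat_vec[OF tW mult_carrier_mat[OF A W] that] assoc_mult_mat_vec[OF A W that] by simp
  define X where "X = pinv M"
  have P: "penrose M X" unfolding X_def by (rule pinv_props[OF Mc Msym])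
  have Xc: "X \<in> carrier_mat m m" using P Mc unfolding penrose_def by auto
  have Xs: "transpose_mat X = X" unfolding X_def by (rule pinv_sym[OF Mc Msym])
  have e: "M * X * M = M" "transpose_mat (M * X) = M * X" using P unfolding penrose_def by auto
  have MX: "M * X = X * M" using e(2) transpose_mult[OF Mc Xc] Xs Msym by simp
  define c where "c = transpose_mat W *\<^sub>v b"
  have cc: "c \<in> carrier_vec m" unfolding c_def using tW b by simp
  have qs': "qs = X *\<^sub>v c" unfolding qs X_def c_def M_def ..
  show qsc: "qs \<in> carrier_vec m" unfolding qs' using Xc cc by simp
  define z where "z = c - M *\<^sub>v qs"
  have zc: "z \<in> carrier_vec m" unfolding z_def using cc Mc qsc by simp
  have MMX: "M *\<^sub>v (M *\<^sub>v (X *\<^sub>v c)) = M *\<^sub>v c"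
  proof -
    have "M *\<^sub>v (M *\<^sub>v (X *\<^sub>v c)) = (M * X * M) *\<^sub>v c"
    proof -
      have "M *\<^sub>v (X *\<^sub>v c) = (M * X) *\<^sub>v c" using Mc Xc cc by simp
      also have "\<dots> = (X * M) *\<^sub>v c" using MX by simp
      also have "\<dots> = X *\<^sub>v (M *\<^sub>v c)" using Mc Xc cc by simp
      finally have "M *\<^sub>v (M *\<^sub>v (X *\<^sub>v c)) = M *\<^sub>v (X *\<^sub>v (M *\<^sub>v c))" by simp
      also have "\<dots> = (M * X * M) *\<^sub>v c" using assoc_mult_mat_vec[OF Mc mult_carrier_mat[OF Xc Mc] cc]
        assoc_mult_mat_vec[OF Xc Mc cc] assoc_mult_mat[OF Mc Xc Mc] by simp
      finally show ?thesis .
    qed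
    thus ?thesis using e(1) by simp
  qed
  have Mz: "M *\<^sub>v z = 0\<^sub>v m"
    unfolding z_def qs' using Mc Xc cc MMX by (simp add: mult_minus_distrib_mat_vec[of _ m m])
  have "(W *\<^sub>v z) \<bullet> (A *\<^sub>v (W *\<^sub>v z)) = z \<bullet> (M *\<^sub>v z)"
    using transpose_vec_mult_scalar[OF W zc, of "A *\<^sub>v (W *\<^sub>v z)"] Mv[OF zc] W A zc
      comm_scalar_prod[of z m "M *\<^sub>v z"] Mc comm_scalar_prod[of "W *\<^sub>v z" N "A *\<^sub>v (W *\<^sub>v z)"] by simp
  hence "(W *\<^sub>v z) \<bullet> (A *\<^sub>v (W *\<^sub>v z)) = 0" using Mz zc by simp
  hence Wz: "W *\<^sub>v z = 0\<^sub>v N" using pd W zc by force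
  have "z \<bullet> z = z \<bullet> c - z \<bullet> (M *\<^sub>v qs)"
    unfolding z_def using zc cc Mc qsc by (simp add: scalar_prod_minus_distrib[of _ m])
  also have "z \<bullet> c = (W *\<^sub>v z) \<bullet> b"
    unfolding c_def using transpose_vec_mult_scalar[OF W zc b] comm_scalar_prod[of z m] zc tW b
      comm_scalar_prod[of b N "W *\<^sub>v z"] W by simp
  also have "z \<bullet> (M *\<^sub>v qs) = qs \<bullet> (M *\<^sub>v z)" by (rule sym_form[OF Mc Msym zc qsc])
  finally have "z \<bullet> z = 0" using Wz Mz b qsc by simp
  hence z0: "z = 0\<^sub>v m" by (rule self_dot_zero[OF zc])
  have Mqs: "M *\<^sub>v qs = c"
  proof (rule eq_vecI)
    fix i assume "i < dim_vec c"
    hence i: "i < m" using cc by simp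
    have "z $ i = 0" using z0 i by simp
    thus "(M *\<^sub>v qs) $ i = c $ i" unfolding z_def using i cc Mc by simp
  qed (use cc Mc in simp)
  define d where "d = q - qs"
  have dc: "d \<in> carrier_vec m" unfolding d_def using q qsc by simp
  define u where "u = W *\<^sub>v qs"
  define w where "w = W *\<^sub>v d"
  have uc: "u \<in> carrier_vec N" and wc: "w \<in> carrier_vec N" unfolding u_def w_def using W qsc dc by auto
  have Wq: "W *\<^sub>v q = u + w"
  proof -
    have "q = qs + d" unfolding d_def using q qsc by (intro eq_vecI) auto
    thus ?thesis unfolding u_def w_def using W qsc dc by (simp add: mult_add_distrib_mat_vec[of _ N m])
  qed
  have cross: "u \<bullet> (A *\<^sub>v w) = b \<bullet> w"
  proof -
    have "u \<bullet> (A *\<^sub>v w) = qs \<bullet> (M *\<^sub>v d)"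
      unfolding u_def w_def using transpose_vec_mult_scalar[OF W qsc, of "A *\<^sub>v (W *\<^sub>v d)"] Mv[OF dc] W A dc qsc
        comm_scalar_prod[of qs m] Mc comm_scalar_prod[of "W *\<^sub>v qs" N "A *\<^sub>v (W *\<^sub>v d)"] by simp
    also have "\<dots> = d \<bullet> (M *\<^sub>v qs)" by (rule sym_form[OF Mc Msym qsc dc])
    also have "\<dots> = d \<bullet> c" using Mqs by simp
    also have "\<dots> = w \<bullet> b"
      unfolding c_def w_def using transpose_vec_mult_scalar[OF W dc b] comm_scalar_prod[of d m] dc tW b
        comm_scalar_prod[of b N "W *\<^sub>v d"] W by simp
    also have "\<dots> = b \<bullet> w" using comm_scalar_prod[OF wc b] .
    finally show ?thesis .
  qed
  have sw: "w \<bullet> (A *\<^sub>v u) = u \<bullet> (A *\<^sub>v w)" by (rule sym_form[OF A sym wc uc])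
  have "(u + w) \<bullet> (A *\<^sub>v (u + w)) = u \<bullet> (A *\<^sub>v u) + u \<bullet> (A *\<^sub>v w) + w \<bullet> (A *\<^sub>v u) + w \<bullet> (A *\<^sub>v w)"
    using uc wc A by (simp add: mult_add_distrib_mat_vec[of _ N N] add_scalar_prod_distrib[of _ N]
        scalar_prod_add_distrib[of _ N])
  moreover have "b \<bullet> (u + w) = b \<bullet> u + b \<bullet> w" using b uc wc by (simp add: scalar_prod_add_distrib[of _ N])
  ultimately show "gq A b (W *\<^sub>v q) = gq A b (W *\<^sub>v qs) + ((W *\<^sub>v (q - qs)) \<bullet> (A *\<^sub>v (W *\<^sub>v (q - qs)))) / 2"
    unfolding gq_def Wq using cross sw by (simp add: u_def[symmetric] w_def[symmetric] d_def[symmetric] field_simps)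
qed



lemma U_W:
  assumes ml: "multilinear_format L n N U" and mu: "\<mu> < L"
    and p: "\<forall>\<nu><L. p \<nu> \<in> carrier_vec (n \<nu>)" and x: "x \<in> carrier_vec (n \<mu>)"
  shows "U (p(\<mu> := x)) = Wmat N n U \<mu> p *\<^sub>v x"
proof -
  have Uc: "U (p(\<mu> := y)) \<in> carrier_vec N" if "y \<in> carrier_vec (n \<mu>)" for y
    using ml p that unfolding multilinear_format_def by auto
  have lin: "U (p(\<mu> := a \<cdot>\<^sub>v y + c \<cdot>\<^sub>v z)) = a \<cdot>\<^sub>v U (p(\<mu> := y)) + c \<cdot>\<^sub>v U (p(\<mu> := z))"
    if "y \<in> carrier_vec (n \<mu>)" "z \<in> carrier_vec (n \<mu>)" for y z a c
    using ml p that mu unfolding multilinear_format_def by blast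
  define yv where "yv j = vec (n \<mu>) (\<lambda>i. if i < j then x $ i else 0)" for j
  have yvc: "yv j \<in> carrier_vec (n \<mu>)" for j unfolding yv_def by simp
  have claim: "\<forall>r<N. U (p(\<mu> := yv j)) $ r = (\<Sum>i<j. x $ i * U (p(\<mu> := unit_vec (n \<mu>) i)) $ r)"
    if "j \<le> n \<mu>" for j
    using that
  proof (induct j)
    case 0
    have "yv 0 = 0 \<cdot>\<^sub>v 0\<^sub>v (n \<mu>) + 0 \<cdot>\<^sub>v 0\<^sub>v (n \<mu>)" unfolding yv_def by (intro eq_vecI) auto
    hence "U (p(\<mu> := yv 0)) = 0 \<cdot>\<^sub>v U (p(\<mu> := 0\<^sub>v (n \<mu>))) + 0 \<cdot>\<^sub>v U (p(\<mu> := 0\<^sub>v (n \<mu>)))"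
      using lin[of "0\<^sub>v (n \<mu>)" "0\<^sub>v (n \<mu>)" 0 0] by simp
    hence "\<forall>r<N. U (p(\<mu> := yv 0)) $ r = 0" using Uc[of "0\<^sub>v (n \<mu>)"] by simp
    thus ?case by (simp add: fun_upd_def)
  next
    case (Suc j)
    have j: "j < n \<mu>" using Suc.prems by simp
    have "yv (Suc j) = 1 \<cdot>\<^sub>v yv j + (x $ j) \<cdot>\<^sub>v unit_vec (n \<mu>) j"
      unfolding yv_def using j by (intro eq_vecI) (auto simp: less_Suc_eq)
    hence e: "U (p(\<mu> := yv (Suc j))) = 1 \<cdot>\<^sub>v U (p(\<mu> := yv j)) + (x $ j) \<cdot>\<^sub>v U (p(\<mu> := unit_vec (n \<mu>) j))"
      using lin[where y="yv j" and z="unit_vec (n \<mu>) j" and a=1 and c="x $ j"] yvc[of j] by simp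
    show ?case
    proof (intro allI impI)
      fix r assume r: "r < N"
      have "U (p(\<mu> := yv (Suc j))) $ r = U (p(\<mu> := yv j)) $ r + x $ j * U (p(\<mu> := unit_vec (n \<mu>) j)) $ r"
        unfolding e using r Uc[OF yvc[of j]] Uc[of "unit_vec (n \<mu>) j"] by simp
      thus "U (p(\<mu> := yv (Suc j))) $ r = (\<Sum>i<Suc j. x $ i * U (p(\<mu> := unit_vec (n \<mu>) i)) $ r)"
        using Suc.hyps j r by (simp add: fun_upd_def)
    qed
  qed
  have yx: "yv (n \<mu>) = x" unfolding yv_def using x by (intro eq_vecI) auto
  show ?thesis
  proof (rule eq_vecI)
    fix r assume "r < dim_vec (Wmat N n U \<mu> p *\<^sub>v x)"
    hence r: "r < N" unfolding Wmat_def by simp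
    have "U (p(\<mu> := x)) $ r = (\<Sum>i<n \<mu>. x $ i * U (p(\<mu> := unit_vec (n \<mu>) i)) $ r)"
      using claim[of "n \<mu>"] yx r by simp
    also have "\<dots> = (Wmat N n U \<mu> p *\<^sub>v x) $ r"
      unfolding Wmat_def using r x by (simp add: scalar_prod_def atLeast0LessThan mult.commute)
    finally show "U (p(\<mu> := x)) $ r = (Wmat N n U \<mu> p *\<^sub>v x) $ r" .
  qed (use Uc[OF x] in \<open>simp add: Wmat_def\<close>)
qed



lemma vnorm_self: "x \<in> carrier_vec N \<Longrightarrow> vnorm (x - x) = 0"
  unfolding vnorm_def scalar_prod_def by simp

lemma vnorm_lipschitz:
  assumes a: "a \<in> carrier_vec N" and w: "w \<in> carrier_vec N" and z: "z \<in> carrier_vec N"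
  shows "\<bar>vnorm (a - z) - vnorm (w - z)\<bar> \<le> vnorm (a - w)"
  using vnorm_diff_triangle[OF a w z] vnorm_diff_triangle[OF w a z] vnorm_minus_comm[OF a w] by linarith

lemma ostrowski:
  fixes v :: "nat \<Rightarrow> real vec"
  assumes vc: "\<And>k. v k \<in> carrier_vec N" and acc: "vbar \<in> acc_points N v"
    and iso: "\<exists>\<epsilon>>0. \<forall>w \<in> acc_points N v. w \<noteq> vbar \<longrightarrow> vnorm (w - vbar) \<ge> \<epsilon>"
    and diff: "(\<lambda>k. vnorm (v (Suc k) - v k)) \<longlonglongrightarrow> 0"
  shows "vec_tendsto v vbar"
proof (rule ccontr)
  assume nt: "\<not> vec_tendsto v vbar"
  obtain e where e: "e > 0" and isoe: "\<And>w. w \<in> acc_points N v \<Longrightarrow> w \<noteq> vbar \<Longrightarrow> vnorm (w - vbar) \<ge> e"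
    using iso by blast
  have vb: "vbar \<in> carrier_vec N" using acc unfolding acc_points_def by auto
  obtain r0 where r0: "strict_mono r0" "vec_tendsto (v \<circ> r0) vbar" using acc unfolding acc_points_def by auto
  have "\<not> (\<lambda>k. vnorm (v k - vbar)) \<longlonglongrightarrow> 0" using nt unfolding vec_tendsto_def .
  then obtain \<eta> where eta: "\<eta> > 0" and freq: "\<And>K. \<exists>k\<ge>K. vnorm (v k - vbar) \<ge> \<eta>"
    unfolding LIMSEQ_iff using vnorm_nonneg by (auto simp: not_less)
  define \<eta>' where "\<eta>' = min \<eta> (e / 3)"
  have eta': "\<eta>' > 0" "\<eta>' \<le> \<eta>" "3 * \<eta>' \<le> e" unfolding \<eta>'_def using eta e by auto
  obtain K1 where K1: "\<And>k. k \<ge> K1 \<Longrightarrow> vnorm (v (Suc k) - v k) < \<eta>'"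
    using diff eta'(1) unfolding LIMSEQ_iff using vnorm_nonneg by (metis abs_of_nonneg real_norm_def diff_zero)
  have close: "\<exists>k\<ge>K. vnorm (v k - vbar) < \<eta>'" for K
  proof -
    obtain K2 where K2: "\<And>j. j \<ge> K2 \<Longrightarrow> vnorm (v (r0 j) - vbar) < \<eta>'"
      using r0(2) eta'(1) unfolding vec_tendsto_def LIMSEQ_iff using vnorm_nonneg
      by (metis abs_of_nonneg real_norm_def diff_zero o_apply)
    have "vnorm (v (r0 (max K K2)) - vbar) < \<eta>'" using K2 by simp
    moreover have "r0 (max K K2) \<ge> K" using seq_suble[OF r0(1), of "max K K2"] by simp
    ultimately show ?thesis by blast
  qed
  define S where "S = {j. \<eta>' \<le> vnorm (v j - vbar) \<and> vnorm (v j - vbar) \<le> 2 * \<eta>'}"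
  have "\<exists>j\<ge>K. j \<in> S" for K
  proof -
    obtain k0 where k0: "k0 \<ge> max K K1" "vnorm (v k0 - vbar) < \<eta>'" using close by blast
    obtain k2 where k2: "k2 \<ge> k0" "vnorm (v k2 - vbar) \<ge> \<eta>" using freq by blast
    define P where "P j = (k0 \<le> j \<and> \<eta>' \<le> vnorm (v j - vbar))" for j
    have Pk2: "P k2" unfolding P_def using k2 eta' by auto
    define j where "j = (LEAST j. P j)"
    have Pj: "P j" unfolding j_def by (rule LeastI[of P k2, OF Pk2])
    have "j \<noteq> k0" using Pj k0(2) unfolding P_def by auto
    then obtain i where ji: "j = Suc i" and ik: "k0 \<le> i" using Pj unfolding P_def
      by (metis le_eq_less_or_eq less_imp_Suc_add add_Suc_right le_add1)
    have "\<not> P i" unfolding j_def by (rule not_less_Least) (use ji j_def in simp)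
    hence vi: "vnorm (v i - vbar) < \<eta>'" using ik unfolding P_def by auto
    have "vnorm (v j - vbar) \<le> vnorm (v j - v i) + vnorm (v i - vbar)"
      by (rule vnorm_diff_triangle[OF vc vc vb])
    moreover have "vnorm (v j - v i) < \<eta>'" using K1[of i] ik k0(1) ji by simp
    ultimately have "vnorm (v j - vbar) \<le> 2 * \<eta>'" using vi by simp
    hence "j \<in> S" using Pj unfolding S_def P_def by simp
    moreover have "j \<ge> K" using Pj k0(1) unfolding P_def by simp
    ultimately show ?thesis by blast
  qed
  hence "infinite S" unfolding infinite_nat_iff_unbounded_le by blast
  then obtain r :: "nat \<Rightarrow> nat" where r: "strict_mono r" "\<And>k. r k \<in> S" using infinite_enumerate[of S] by auto
  have bnd: "vnorm ((v \<circ> r) k) \<le> vnorm vbar + 2 * \<eta>'" for k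
  proof -
    have "v (r k) = (v (r k) - vbar) + vbar" using vc[of "r k"] vb by (intro eq_vecI) auto
    hence "vnorm (v (r k)) \<le> vnorm (v (r k) - vbar) + vnorm vbar"
      using vnorm_triangle[of "v (r k) - vbar" N vbar] vc[of "r k"] vb by simp
    thus ?thesis using r(2)[of k] unfolding S_def by simp
  qed
  have vrc: "\<And>k. (v \<circ> r) k \<in> carrier_vec N" using vc by simp
  obtain r' w where r': "strict_mono r'" and wc: "w \<in> carrier_vec N" and t: "vec_tendsto ((v \<circ> r) \<circ> r') w"
    using bw[where X="v \<circ> r" and N=N and B="vnorm vbar + 2 * \<eta>'", OF vrc bnd] by auto
  have wacc: "w \<in> acc_points N v" unfolding acc_points_def
    using wc t strict_mono_o[OF r(1) r'] by (auto simp: o_assoc)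
  have lim: "(\<lambda>k. vnorm (v (r (r' k)) - vbar)) \<longlonglongrightarrow> vnorm (w - vbar)"
  proof -
    have "(\<lambda>k. vnorm (v (r (r' k)) - vbar) - vnorm (w - vbar)) \<longlonglongrightarrow> 0"
      by (rule squeeze0[of _ "\<lambda>k. vnorm (v (r (r' k)) - w)"],
          rule vnorm_lipschitz[OF vc wc vb], use t in \<open>simp add: vec_tendsto_def\<close>)
    thus ?thesis by (rule LIM_zero_cancel)
  qed
  have "vnorm (w - vbar) \<ge> \<eta>'"
    by (rule LIMSEQ_le_const[OF lim]) (use r(2) in \<open>auto simp: S_def\<close>)
  moreover have "vnorm (w - vbar) \<le> 2 * \<eta>'"
    by (rule LIMSEQ_le_const2[OF lim]) (use r(2) in \<open>auto simp: S_def\<close>)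
  moreover have "w \<noteq> vbar" using \<open>vnorm (w - vbar) \<ge> \<eta>'\<close> eta'(1) vnorm_self[OF vb] by auto
  ultimately show False using isoe[OF wacc] eta' by linarith
qed



lemma gq_lower:
  fixes A :: "real mat"
  assumes A: "A \<in> carrier_mat N N" and c: "c > 0"
    and co: "\<forall>x \<in> carrier_vec N. c * (x \<bullet> x) \<le> x \<bullet> (A *\<^sub>v x)"
    and b: "b \<in> carrier_vec N" and x: "x \<in> carrier_vec N"
  shows "gq A b x \<ge> - (b \<bullet> b) / (2 * c)"
proof -
  have "0 \<le> (\<Sum>i<N. (c * x $ i - b $ i)\<^sup>2)" by (intro sum_nonneg) auto
  also have "\<dots> = (\<Sum>i<N. c\<^sup>2 * (x $ i * x $ i) - 2 * c * (b $ i * x $ i) + b $ i * b $ i)"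
    by (intro sum.cong) (auto simp: power2_eq_square algebra_simps)
  also have "\<dots> = c\<^sup>2 * (x \<bullet> x) - 2 * c * (b \<bullet> x) + b \<bullet> b"
    using x b by (simp add: scalar_prod_def atLeast0LessThan sum.distrib sum_subtractf sum_distrib_left)
  finally have h: "0 \<le> c\<^sup>2 * (x \<bullet> x) - 2 * c * (b \<bullet> x) + b \<bullet> b" .
  have "0 \<le> (c\<^sup>2 * (x \<bullet> x) - 2 * c * (b \<bullet> x) + b \<bullet> b) / (2 * c)" using h c by simp
  also have "\<dots> = c * (x \<bullet> x) / 2 - b \<bullet> x + (b \<bullet> b) / (2 * c)"
    using c by (simp add: field_simps power2_eq_square)
  finally have "- (b \<bullet> b) / (2 * c) \<le> c * (x \<bullet> x) / 2 - b \<bullet> x" by simp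
  also have "\<dots> \<le> gq A b x" unfolding gq_def using co x by simp
  finally show ?thesis .
qed



theorem mainTheorem2:
  fixes d L N :: nat and m n :: "nat \<Rightarrow> nat"
    and A :: "real mat" and b :: "real vec"
    and U :: "(nat \<Rightarrow> real vec) \<Rightarrow> real vec"
    and pp :: "nat \<Rightarrow> nat \<Rightarrow> real vec"
    and vbar :: "real vec"
  assumes d_pos: "d \<ge> 1"
    and m_pos: "\<forall>\<nu><d. m \<nu> > 0"
    and N_def: "N = (\<Prod>\<nu><d. m \<nu>)"
    and A_carrier: "A \<in> carrier_mat N N"
    and A_sym: "transpose_mat A = A"
    and A_pd: "\<forall>x \<in> carrier_vec N. x \<noteq> 0\<^sub>v N \<longrightarrow> x \<bullet> (A *\<^sub>v x) > 0"
    and b_carrier: "b \<in> carrier_vec N"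
    and b_nz: "b \<noteq> 0\<^sub>v N"
    and L_ge: "L \<ge> d"
    and U_ml: "multilinear_format L n N U"
    and init: "\<forall>\<mu><L. pp 0 \<mu> \<in> carrier_vec (n \<mu>)"
    and ALS: "\<forall>k. \<forall>\<mu><L.
       (let W = Wmat N n U \<mu> (\<lambda>\<nu>. if \<nu> < \<mu> then pp (Suc k) \<nu> else pp k \<nu>)
        in pp (Suc k) \<mu> = pinv (transpose_mat W * A * W) *\<^sub>v (transpose_mat W *\<^sub>v b))"
    and bounded: "\<exists>B. \<forall>k. pnorm L (pp k) \<le> B"
    and acc: "vbar \<in> acc_points N (\<lambda>k. U (pp k))"
    and isolated: "\<exists>\<epsilon>>0. \<forall>w \<in> acc_points N (\<lambda>k. U (pp k)).
                      w \<noteq> vbar \<longrightarrow> vnorm (w - vbar) \<ge> \<epsilon>"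
  shows "vec_tendsto (\<lambda>k. U (pp k)) vbar"
proof -
  obtain c where c: "c > 0" and co: "\<forall>x \<in> carrier_vec N. c * (x \<bullet> x) \<le> x \<bullet> (A *\<^sub>v x)"
    using coercive[OF A_carrier A_pd] by blast
  define qk where "qk k \<mu> = (\<lambda>\<nu>. if \<nu> < \<mu> then pp (Suc k) \<nu> else pp k \<nu>)" for k \<mu>
  define Wk where "Wk k \<mu> = Wmat N n U \<mu> (qk k \<mu>)" for k \<mu>
  have Wkc: "Wk k \<mu> \<in> carrier_mat N (n \<mu>)" for k \<mu> unfolding Wk_def Wmat_def by simp
  have ALS': "pp (Suc k) \<mu> = pinv (transpose_mat (Wk k \<mu>) * A * Wk k \<mu>) *\<^sub>v (transpose_mat (Wk k \<mu>) *\<^sub>v b)"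
    if "\<mu> < L" for k \<mu>
    using ALS that unfolding Wk_def qk_def Let_def by blast
  have pcar: "pp k \<mu> \<in> carrier_vec (n \<mu>)" if "\<mu> < L" for k \<mu>
  proof (cases k)
    case 0 thus ?thesis using init that by simp
  next
    case (Suc k')
    show ?thesis unfolding Suc
      by (rule als_step(1)[OF Wkc A_carrier A_sym A_pd b_carrier zero_carrier_vec ALS'[OF that]])
  qed
  have qkc: "\<forall>\<nu><L. qk k \<mu> \<nu> \<in> carrier_vec (n \<nu>)" for k \<mu> unfolding qk_def using pcar by simp
  define w where "w k \<mu> = U (qk k \<mu>)" for k \<mu>
  have wc: "w k \<mu> \<in> carrier_vec N" for k \<mu>
    using U_ml qkc[of k \<mu>] unfolding w_def multilinear_format_def by blast
  have w0: "w k 0 = U (pp k)" for k unfolding w_def qk_def by simp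
  have wL: "w k L = U (pp (Suc k))" for k
    using U_ml unfolding w_def qk_def multilinear_format_def by auto
  have vc: "U (pp k) \<in> carrier_vec N" for k using wc[of k 0] w0 by simp
  define D where "D k \<mu> = (w k \<mu> - w k (Suc \<mu>)) \<bullet> (w k \<mu> - w k (Suc \<mu>))" for k \<mu>
  have Dnn: "D k \<mu> \<ge> 0" for k \<mu> unfolding D_def by (rule self_dot_nonneg)
  have step: "gq A b (w k \<mu>) \<ge> gq A b (w k (Suc \<mu>)) + c / 2 * D k \<mu>" if mu: "\<mu> < L" for k \<mu>
  proof -
    have q1: "qk k \<mu> = (qk k \<mu>)(\<mu> := pp k \<mu>)" unfolding qk_def by auto
    have q2: "qk k (Suc \<mu>) = (qk k \<mu>)(\<mu> := pp (Suc k) \<mu>)" unfolding qk_def by (auto simp: less_Suc_eq)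
    have e1: "w k \<mu> = Wk k \<mu> *\<^sub>v pp k \<mu>"
      unfolding w_def Wk_def by (subst q1, rule U_W[OF U_ml mu qkc pcar[OF mu]])
    have e2: "w k (Suc \<mu>) = Wk k \<mu> *\<^sub>v pp (Suc k) \<mu>"
      unfolding w_def Wk_def by (subst q2, rule U_W[OF U_ml mu qkc pcar[OF mu]])
    have "gq A b (Wk k \<mu> *\<^sub>v pp k \<mu>) = gq A b (Wk k \<mu> *\<^sub>v pp (Suc k) \<mu>) +
        ((Wk k \<mu> *\<^sub>v (pp k \<mu> - pp (Suc k) \<mu>)) \<bullet> (A *\<^sub>v (Wk k \<mu> *\<^sub>v (pp k \<mu> - pp (Suc k) \<mu>)))) / 2"
      by (rule als_step(2)[OF Wkc A_carrier A_sym A_pd b_carrier pcar[OF mu] ALS'[OF mu]])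
    moreover have "Wk k \<mu> *\<^sub>v (pp k \<mu> - pp (Suc k) \<mu>) = w k \<mu> - w k (Suc \<mu>)"
      unfolding e1 e2 using Wkc pcar[OF mu] by (simp add: mult_minus_distrib_mat_vec[of _ N "n \<mu>"])
    moreover have "c * D k \<mu> \<le> (w k \<mu> - w k (Suc \<mu>)) \<bullet> (A *\<^sub>v (w k \<mu> - w k (Suc \<mu>)))"
      unfolding D_def using co wc by simp
    ultimately show ?thesis unfolding e1[symmetric] e2[symmetric] by simp
  qed
  define S where "S k = (\<Sum>\<mu><L. D k \<mu>)" for k
  have Snn: "S k \<ge> 0" for k unfolding S_def using Dnn by (simp add: sum_nonneg)
  have tele: "gq A b (w k 0) \<ge> gq A b (w k m') + c / 2 * (\<Sum>\<mu><m'. D k \<mu>)" if "m' \<le> L" for k m'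
    using that
  proof (induct m')
    case (Suc m')
    thus ?case using step[of m' k] by (simp add: algebra_simps)
  qed simp
  have stepk: "gq A b (U (pp k)) \<ge> gq A b (U (pp (Suc k))) + c / 2 * S k" for k
    using tele[of L k] w0 wL unfolding S_def by simp
  have total: "gq A b (U (pp 0)) \<ge> gq A b (U (pp K)) + c / 2 * (\<Sum>k<K. S k)" for K
  proof (induct K)
    case (Suc K)
    thus ?case using stepk[of K] by (simp add: algebra_simps)
  qed simp
  have psb: "(\<Sum>k<K. S k) \<le> 2 / c * (gq A b (U (pp 0)) + (b \<bullet> b) / (2 * c))" for K
  proof -
    have "gq A b (U (pp K)) \<ge> - (b \<bullet> b) / (2 * c)" by (rule gq_lower[OF A_carrier c co b_carrier vc])
    hence "c / 2 * (\<Sum>k<K. S k) \<le> gq A b (U (pp 0)) + (b \<bullet> b) / (2 * c)" using total[of K] by simp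
    thus ?thesis using c by (simp add: field_simps)
  qed
  have "summable S" by (rule summableI_nonneg_bounded[OF Snn psb])
  hence S0: "S \<longlonglongrightarrow> 0" by (rule summable_LIMSEQ_zero)
  have chain: "vnorm (w k m' - w k 0) \<le> (\<Sum>\<mu><m'. vnorm (w k (Suc \<mu>) - w k \<mu>))" for k m'
  proof (induct m')
    case 0 thus ?case using vnorm_self[OF wc] by simp
  next
    case (Suc m')
    have "vnorm (w k (Suc m') - w k 0) \<le> vnorm (w k (Suc m') - w k m') + vnorm (w k m' - w k 0)"
      by (rule vnorm_diff_triangle[OF wc wc wc])
    thus ?case using Suc by simp
  qed
  have Dle: "sqrt (D k \<mu>) \<le> sqrt (S k)" if "\<mu> < L" for k \<mu>
    unfolding S_def using that Dnn by (intro real_sqrt_le_mono member_le_sum) auto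
  have vd: "vnorm (U (pp (Suc k)) - U (pp k)) \<le> real L * sqrt (S k)" for k
  proof -
    have "vnorm (U (pp (Suc k)) - U (pp k)) \<le> (\<Sum>\<mu><L. vnorm (w k (Suc \<mu>) - w k \<mu>))"
      using chain[of k L] w0 wL by simp
    also have "\<dots> \<le> (\<Sum>\<mu><L. sqrt (S k))"
    proof (rule sum_mono)
      fix \<mu> assume "\<mu> \<in> {..<L}"
      hence "\<mu> < L" by simp
      have "vnorm (w k (Suc \<mu>) - w k \<mu>) = sqrt (D k \<mu>)"
        unfolding D_def vnorm_def[symmetric] by (rule vnorm_minus_comm[OF wc wc])
      thus "vnorm (w k (Suc \<mu>) - w k \<mu>) \<le> sqrt (S k)" using Dle[OF \<open>\<mu> < L\<close>] by simp
    qed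
    also have "\<dots> = real L * sqrt (S k)" by simp
    finally show ?thesis .
  qed
  have "(\<lambda>k. real L * sqrt (S k)) \<longlonglongrightarrow> real L * sqrt 0"
    by (intro tendsto_intros S0)
  hence g: "(\<lambda>k. real L * sqrt (S k)) \<longlonglongrightarrow> 0" by simp
  have "(\<lambda>k. vnorm (U (pp (Suc k)) - U (pp k))) \<longlonglongrightarrow> 0"
  proof (rule squeeze0[OF _ g])
    fix k
    have "vnorm (U (pp (Suc k)) - U (pp k)) \<ge> 0" by (rule vnorm_nonneg)
    thus "\<bar>vnorm (U (pp (Suc k)) - U (pp k))\<bar> \<le> real L * sqrt (S k)" using vd[of k] by linarith
  qed
  thus ?thesis by (rule ostrowski[OF vc acc isolated])
qed


end
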